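(* Let $T$ be a finite set of types and $n$ a positive integer. Suppose there exist $(\hat\lambda,\hat\mu)\in\mathcal{S}(\mathcal{G}_T^n)$ such that $\hat\lambda/(1-\hat\mu)=\gamma(\mathcal{G}_T^n)$. Then there exist $(c^1,f^1),(c^2,f^2)\in T$, $(x_1,y_1,z_1),(x_2,y_2,z_2)\in\mathcal{I}_{\mathcal{R}}$ and $\eta\in[0,1]$ such that for $j=1,2$ $$(z_j-x_j)f^j(x_j)+(y_j-z_j)f^j(x_j+1)+c^j(x_j)=\hat\lambda\,c^j(y_j)+\hat\mu\,c^j(x_j),$$ and $$\eta\big[z_1f^1(x_1)+(y_1-z_1)f^1(x_1+1)\big]+(1-\eta)\big[z_2f^2(x_2)+(y_2-z_2)f^2(x_2+1)\big]=\eta\,x_1f^1(x_1)+(1-\eta)\,x_2f^2(x_2).$$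
   Context: $T=\{(c_1,f_1),\dots,(c_m,f_m)\}$ is a finite set of types with $c_t,f_t:\{1,\dots,n\}\to\mathbb{R}$, extended by $c_t(0)=f_t(0)=f_t(n+1)=0$. With $\mathbb{N}=\{0,1,\dots\}$, $\mathcal{I}=\{(x,y,z)\in\mathbb{N}^3:1\le x+y-z\le n,\ z\le\min\{x,y\}\}$ and $\mathcal{I}_{\mathcal{R}}=\{(x,y,z)\in\mathcal{I}:x+y-z=n\text{ or }(x-z)(y-z)z=0\}$. $\mathcal{S}(\mathcal{G}_T^n)$ is the set of $(\lambda,\mu)$ with $\lambda>0$, $\mu<1$ such that for all $(c,f)\in T$ and all $(x,y,z)\in\mathcal{I}_{\mathcal{R}}$: $(z-x)f(x)+(y-z)f(x+1)+c(x)\le\lambda c(y)+\mu c(x)$. $\gamma(\mathcal{G}_T^n)=\inf\{\lambda/(1-\mu):(\lambda,\mu)\in\mathcal{S}(\mathcal{G}_T^n)\}$. *)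

theory Defs
  imports Complex_Main
begin

text \<open>A type is a pair (c, f) of functions nat => real; only the values on
  0..n (for c) and 0..n+1 (for f) matter, with the extension convention
  c 0 = f 0 = f (n+1) = 0 imposed as a hypothesis.\<close>

definition idx :: "nat \<Rightarrow> (nat \<times> nat \<times> nat) set" where
  "idx n = {(x, y, z). z \<le> x \<and> z \<le> y \<and> 1 \<le> x + y - z \<and> x + y - z \<le> n}"

definition idxR :: "nat \<Rightarrow> (nat \<times> nat \<times> nat) set" where
  "idxR n = {(x, y, z). (x, y, z) \<in> idx n \<and>
      (x + y - z = n \<or> (x - z) * (y - z) * z = 0)}"

definition Sset :: "((nat \<Rightarrow> real) \<times> (nat \<Rightarrow> real)) set \<Rightarrow> nat \<Rightarrow> (real \<times> real) set" where
  "Sset T n = {(lam, mu). lam > 0 \<and> mu < 1 \<and>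
      (\<forall>(c, f) \<in> T. \<forall>(x, y, z) \<in> idxR n.
         (real z - real x) * f x + (real y - real z) * f (x + 1) + c x
           \<le> lam * c y + mu * c x)}"

definition gamma :: "((nat \<Rightarrow> real) \<times> (nat \<Rightarrow> real)) set \<Rightarrow> nat \<Rightarrow> real" where
  "gamma T n = Inf {lam / (1 - mu) | lam mu. (lam, mu) \<in> Sset T n}"

end

theory Submission
  imports Defs
begin

lemma ev_poly:
  fixes s p a :: real
  assumes "s \<ge> 0" "s > 0 \<or> p > 0"
  shows "eventually (\<lambda>t. 0 \<le> s + p*t - a*t^2) (at_right 0)"
proof (cases "s > 0")
  case True
  have "((\<lambda>t. s + p*t - a*t^2) \<longlongrightarrow> s + p*0 - a*0^2) (at_right 0)"
    by (intro tendsto_intros)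
  then have "((\<lambda>t. s + p*t - a*t^2) \<longlongrightarrow> s) (at_right 0)" by simp
  from order_tendstoD(1)[OF this True] show ?thesis
    by (rule eventually_mono) simp
next
  case False
  then have s0: "s = 0" and p0: "p > 0" using assms by auto
  have "((\<lambda>t. p - a*t) \<longlongrightarrow> p - a*0) (at_right 0)"
    by (intro tendsto_intros)
  then have "((\<lambda>t. p - a*t) \<longlongrightarrow> p) (at_right 0)" by simp
  from order_tendstoD(1)[OF this p0]
  have "eventually (\<lambda>t. 0 < p - a*t) (at_right 0)" .
  moreover have "eventually (\<lambda>t. (0::real) < t) (at_right 0)"
    by (rule eventually_at_right_less)
  ultimately show ?thesis
  proof eventually_elim
    case (elim t)
    then have "0 \<le> t * (p - a*t)" by simp
    then show ?case using s0 by (simp add: algebra_simps power2_eq_square)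
  qed
qed

lemma finite_idxR: "finite (idxR n)"
proof -
  have "idxR n \<subseteq> {..n} \<times> {..n} \<times> {..n}"
    by (auto simp: idxR_def idx_def)
  then show ?thesis by (rule finite_subset) simp
qed

theorem lemma3:
  fixes T :: "((nat \<Rightarrow> real) \<times> (nat \<Rightarrow> real)) set" and n :: nat
    and lh mh :: real
  assumes "finite T" and "n \<ge> 1"
    and "\<forall>(c, f) \<in> T. c 0 = 0 \<and> f 0 = 0 \<and> f (n + 1) = 0"
    and "(lh, mh) \<in> Sset T n"
    and "lh / (1 - mh) = gamma T n"
  shows "\<exists>c1 f1 c2 f2 x1 y1 z1 x2 y2 z2 (eta::real).
    (c1, f1) \<in> T \<and> (c2, f2) \<in> T \<and>
    (x1, y1, z1) \<in> idxR n \<and> (x2, y2, z2) \<in> idxR n \<and>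
    0 \<le> eta \<and> eta \<le> 1 \<and>
    (real z1 - real x1) * f1 x1 + (real y1 - real z1) * f1 (x1 + 1) + c1 x1
      = lh * c1 y1 + mh * c1 x1 \<and>
    (real z2 - real x2) * f2 x2 + (real y2 - real z2) * f2 (x2 + 1) + c2 x2
      = lh * c2 y2 + mh * c2 x2 \<and>
    eta * (real z1 * f1 x1 + (real y1 - real z1) * f1 (x1 + 1))
      + (1 - eta) * (real z2 * f2 x2 + (real y2 - real z2) * f2 (x2 + 1))
      = eta * (real x1 * f1 x1) + (1 - eta) * (real x2 * f2 x2)"
proof -
  define K where "K = T \<times> idxR n"
  define aa where "aa k = fst (fst k) (fst (snd k))" for k :: "((nat \<Rightarrow> real) \<times> (nat \<Rightarrow> real)) \<times> nat \<times> nat \<times> nat"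
  have finK: "finite K" unfolding K_def using assms(1) finite_idxR by simp
  let ?d = "\<lambda>((c::nat\<Rightarrow>real, f::nat\<Rightarrow>real), (x::nat, y::nat, z::nat)).
     (real z - real x) * f x + (real y - real z) * f (x + 1) + c x"
  let ?a = "\<lambda>((c::nat\<Rightarrow>real, f::nat\<Rightarrow>real), (x::nat, y::nat, z::nat)). c y"
  let ?b = "\<lambda>((c::nat\<Rightarrow>real, f::nat\<Rightarrow>real), (x::nat, y::nat, z::nat)). c x"
  define s where "s k = lh * ?a k + mh * ?b k - ?d k" for k
  define e where "e k = lh * ?a k - (1 - mh) * ?b k" for k
  have S: "lh > 0" "mh < 1" and Sc: "\<And>k. k \<in> K \<Longrightarrow> s k \<ge> 0"
    using assms(4) by (auto simp: Sset_def K_def s_def)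
  have key: "\<exists>k1\<in>K. \<exists>k2\<in>K. s k1 = 0 \<and> s k2 = 0 \<and> e k1 \<ge> 0 \<and> e k2 \<le> 0"
  proof (rule ccontr)
    assume neg: "\<not> ?thesis"
    obtain \<sigma> :: real where sig: "\<sigma> = 1 \<or> \<sigma> = -1"
      and sigp: "\<And>k. k \<in> K \<Longrightarrow> s k = 0 \<Longrightarrow> \<sigma> * e k > 0"
    proof (cases "\<forall>k\<in>K. s k = 0 \<longrightarrow> e k > 0")
      case True
      then show ?thesis using that[of 1] by auto
    next
      case False
      then have "\<forall>k\<in>K. s k = 0 \<longrightarrow> e k < 0" using neg by force
      then show ?thesis using that[of "-1"] by auto
    qed
    have ev1: "eventually (\<lambda>t. \<forall>k\<in>K. 0 \<le> s k + (\<sigma> * e k) * t - ?a k * t^2) (at_right 0)"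
    proof (rule eventually_ball_finite[OF finK], intro ballI)
      fix k assume k: "k \<in> K"
      show "eventually (\<lambda>t. 0 \<le> s k + (\<sigma> * e k) * t - ?a k * t^2) (at_right 0)"
        by (rule ev_poly) (use Sc[OF k] sigp[OF k] in force)+
    qed
    have "((\<lambda>t. lh * (1 + \<sigma> * t) - t^2) \<longlongrightarrow> lh * (1 + \<sigma> * 0) - 0^2) (at_right 0)"
      by (intro tendsto_intros)
    then have "((\<lambda>t. lh * (1 + \<sigma> * t) - t^2) \<longlongrightarrow> lh) (at_right 0)" by simp
    from order_tendstoD(1)[OF this S(1)]
    have ev2: "eventually (\<lambda>t. 0 < lh * (1 + \<sigma> * t) - t^2) (at_right 0)" .
    have "((\<lambda>t. 1 + \<sigma> * t) \<longlongrightarrow> 1 + \<sigma> * 0) (at_right 0)"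
      by (intro tendsto_intros)
    then have "((\<lambda>t. 1 + \<sigma> * t) \<longlongrightarrow> 1) (at_right (0::real))" by simp
    from order_tendstoD(1)[OF this, of 0]
    have ev3: "eventually (\<lambda>t. 0 < 1 + \<sigma> * t) (at_right (0::real))" by simp
    have ev4: "eventually (\<lambda>t. (0::real) < t) (at_right 0)"
      by (rule eventually_at_right_less)
    have "eventually (\<lambda>t. (\<forall>k\<in>K. 0 \<le> s k + (\<sigma> * e k) * t - ?a k * t^2)
        \<and> 0 < lh * (1 + \<sigma> * t) - t^2 \<and> 0 < 1 + \<sigma> * t \<and> 0 < t) (at_right (0::real))"
      using ev1 ev2 ev3 ev4 by eventually_elim auto
    then obtain t :: real where t1: "\<forall>k\<in>K. 0 \<le> s k + (\<sigma> * e k) * t - ?a k * t^2"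
      and t2: "0 < lh * (1 + \<sigma> * t) - t^2" and t3: "0 < 1 + \<sigma> * t" and t4: "0 < t"
      using eventually_happens'[OF trivial_limit_at_right_real] by blast
    define l' where "l' = lh * (1 + \<sigma> * t) - t^2"
    define m' where "m' = mh - \<sigma> * t * (1 - mh)"
    have m'eq: "1 - m' = (1 - mh) * (1 + \<sigma> * t)" unfolding m'_def by (simp add: algebra_simps)
    have pos: "0 < (1 - mh) * (1 + \<sigma> * t)" using S t3 by simp
    have ineq: "\<forall>(c, f) \<in> T. \<forall>(x, y, z) \<in> idxR n.
         (real z - real x) * f x + (real y - real z) * f (x + 1) + c x \<le> l' * c y + m' * c x"
    proof (intro ballI, clarify)
      fix c f x y z assume cf: "(c, f) \<in> T" and xyz: "(x, y, z) \<in> idxR n"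
      have "((c, f), (x, y, z)) \<in> K" using cf xyz K_def by simp
      with t1 have h: "0 \<le> s ((c, f), (x, y, z)) + (\<sigma> * e ((c, f), (x, y, z))) * t - c y * t^2"
        by fastforce
      have "s ((c, f), (x, y, z)) + (\<sigma> * e ((c, f), (x, y, z))) * t - c y * t^2
          = l' * c y + m' * c x - ((real z - real x) * f x + (real y - real z) * f (x + 1) + c x)"
        unfolding s_def e_def l'_def m'_def by (simp add: algebra_simps)
      with h show "(real z - real x) * f x + (real y - real z) * f (x + 1) + c x \<le> l' * c y + m' * c x"
        by linarith
    qed
    have "0 < l'" using t2 l'_def by simp
    moreover have "m' < 1" using m'eq pos by linarith
    ultimately have mem: "(l', m') \<in> Sset T n"
      unfolding Sset_def using ineq by blast
    have bdd: "bdd_below {lam / (1 - mu) | lam mu. (lam, mu) \<in> Sset T n}"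
      by (rule bdd_belowI[of _ 0]) (auto simp: Sset_def)
    have "gamma T n \<le> l' / (1 - m')"
      unfolding gamma_def by (rule cInf_lower[OF _ bdd]) (use mem in blast)
    also have "l' / (1 - m') < lh / (1 - mh)"
    proof -
      have "l' / (1 - m') = (lh * (1 + \<sigma> * t) - t^2) / ((1 - mh) * (1 + \<sigma> * t))"
        using m'eq l'_def by simp
      also have "\<dots> < (lh * (1 + \<sigma> * t)) / ((1 - mh) * (1 + \<sigma> * t))"
        using pos t4 by (intro divide_strict_right_mono) auto
      also have "\<dots> = lh / (1 - mh)" using t3 by simp
      finally show ?thesis .
    qed
    finally show False using assms(5) by simp
  qed
  then obtain k1 k2 where k1: "k1 \<in> K" and k2: "k2 \<in> K" and s1: "s k1 = 0" and s2: "s k2 = 0"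
    and e1: "e k1 \<ge> 0" and e2: "e k2 \<le> 0" by blast
  obtain c1 f1 x1 y1 z1 where k1d: "k1 = ((c1, f1), (x1, y1, z1))" by (metis prod.collapse)
  obtain c2 f2 x2 y2 z2 where k2d: "k2 = ((c2, f2), (x2, y2, z2))" by (metis prod.collapse)
  define E1 where "E1 = (real z1 - real x1) * f1 x1 + (real y1 - real z1) * f1 (x1 + 1)"
  define E2 where "E2 = (real z2 - real x2) * f2 x2 + (real y2 - real z2) * f2 (x2 + 1)"
  have t1: "(real z1 - real x1) * f1 x1 + (real y1 - real z1) * f1 (x1 + 1) + c1 x1
      = lh * c1 y1 + mh * c1 x1" using s1 k1d s_def by simp
  have t2: "(real z2 - real x2) * f2 x2 + (real y2 - real z2) * f2 (x2 + 1) + c2 x2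
      = lh * c2 y2 + mh * c2 x2" using s2 k2d s_def by simp
  have "e k1 = lh * c1 y1 - (1 - mh) * c1 x1" unfolding k1d e_def by simp
  then have "e k1 = lh * c1 y1 - c1 x1 + mh * c1 x1" by (simp add: left_diff_distrib)
  moreover have "E1 + c1 x1 = lh * c1 y1 + mh * c1 x1" using t1 unfolding E1_def .
  ultimately have E1e: "E1 = e k1" by linarith
  have "e k2 = lh * c2 y2 - (1 - mh) * c2 x2" unfolding k2d e_def by simp
  then have "e k2 = lh * c2 y2 - c2 x2 + mh * c2 x2" by (simp add: left_diff_distrib)
  moreover have "E2 + c2 x2 = lh * c2 y2 + mh * c2 x2" using t2 unfolding E2_def .
  ultimately have E2e: "E2 = e k2" by linarith
  define eta where "eta = (if E1 = E2 then 1 else - E2 / (E1 - E2))"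
  have eta1: "0 \<le> eta \<and> eta \<le> 1" and eta2: "eta * E1 + (1 - eta) * E2 = 0"
  proof -
    show "0 \<le> eta \<and> eta \<le> 1"
    proof (cases "E1 = E2")
      case False
      then have "E1 - E2 > 0" using e1 e2 E1e E2e by simp
      then show ?thesis using e1 e2 E1e E2e by (simp add: eta_def False divide_simps)
    qed (simp add: eta_def)
    show "eta * E1 + (1 - eta) * E2 = 0"
    proof (cases "E1 = E2")
      case False
      then have "E1 - E2 \<noteq> 0" by simp
      then show ?thesis by (simp add: eta_def False field_simps)
    next
      case True
      then show ?thesis using e1 e2 E1e E2e by (simp add: eta_def)
    qed
  qed
  have fin: "eta * (real z1 * f1 x1 + (real y1 - real z1) * f1 (x1 + 1))
      + (1 - eta) * (real z2 * f2 x2 + (real y2 - real z2) * f2 (x2 + 1))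
      = eta * (real x1 * f1 x1) + (1 - eta) * (real x2 * f2 x2)"
    using eta2 unfolding E1_def E2_def by (simp add: algebra_simps)
  show ?thesis
    apply (rule exI[of _ c1], rule exI[of _ f1], rule exI[of _ c2], rule exI[of _ f2])
    apply (rule exI[of _ x1], rule exI[of _ y1], rule exI[of _ z1])
    apply (rule exI[of _ x2], rule exI[of _ y2], rule exI[of _ z2], rule exI[of _ eta])
    using k1 k2 k1d k2d K_def t1 t2 eta1 fin by auto
qed

end
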